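(* For every problem size $(n,m)$, the sets $\chi\mathrm{MF}$ and $\chi\mathrm{SP}\cup\chi\mathrm{MF}$ are closed subsets of $\mathrm{JSP}(n,m)$, and $\chi\mathrm{MF}\subset\overline{\chi\mathrm{SP}}$; consequently $\overline{\chi\mathrm{SP}}=\chi\mathrm{SP}\cup\chi\mathrm{MF}$.
   Context: Jet space: $\mathrm{JSP}(n,m)=\mathbb R^{nm_\le+m_\le+nm_=+m_=+n}$ with elements $\sigma=((a_i,\alpha_i)_{i=1..m_\le},(b_j,\beta_j)_{j=1..m_=},a_{m_\le^*})$, $a_i,b_j,a_{m_\le^*}\in\mathbb R^n$, $\alpha_i,\beta_j\in\mathbb R$, $m_\le^*:=m_\le+1$. Let $I_0(\sigma)=\{i\le m_\le:\alpha_i=0\}$, $I_0^*=I_0\cup\{m_\le^*\}$, and $C(\sigma)$ the set of $(\mu,\lambda)\in[0,\infty)^{m_\le^*}\times\mathbb R^{m_=}$ such that $\alpha_i\le0$ for all $i$, $\mu_i=0$ for $i\notin I_0^*$, and $\sum_i\mu_ia_i+\sum_j\lambda_jb_j=0$ (so $C(\sigma)=\emptyset$ if some $\alpha_i>0$). $\mathcal I(\sigma)$ is the set of pairs $(I,J)$, $I\subset I_0^*$, $J\subset\{1..m_=\}$, with $I\dot\cup J\ne\emptyset$, admitting $(\mu,\lambda)\in C(\sigma)$ with $\mu_i>0$ ($i\in I$), $\lambda_j\ne0$ ($j\in J$), and inclusion-minimal (for $I\dot\cup J$) among such pairs. $\mathcal I^{SP}(\sigma)=\{(I,J)\in\mathcal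 I(\sigma): m_\le^*\in I\}$, $\mathcal I^{MF}=\mathcal I\setminus\mathcal I^{SP}$. $\chi\mathrm{SP}=\{\sigma:\mathcal I^{SP}(\sigma)\ne\emptyset\}$, $\chi\mathrm{MF}=\{\sigma:\mathcal I^{MF}(\sigma)\ne\emptyset\}$. *)

theory Defs
  imports "HOL-Analysis.Analysis"
begin

text \<open>A jet sigma = (a, alpha, b, beta) with
  a :: nat => real^'n  (a i for i in {1..ml}, and a (ml+1) is a_{m_le^*}),
  alpha :: nat => real (indices 1..ml), b :: nat => real^'n, beta :: nat => real (indices 1..me).
  All components outside their index range are 0, so JSP is a copy of the Euclidean space
  R^{n ml + ml + n me + me + n} inside the product space (with product topology).\<close>

type_synonym 'n jet = "(nat \<Rightarrow> real^'n) \<times> (nat \<Rightarrow> real) \<times> (nat \<Rightarrow> real^'n) \<times> (nat \<Rightarrow> real)"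

definition JSP :: "nat \<Rightarrow> nat \<Rightarrow> ('n::finite) jet set" where
  "JSP ml me = {(a, al, b, be).
      (\<forall>i. i \<notin> {1..ml+1} \<longrightarrow> a i = 0) \<and> (\<forall>i. i \<notin> {1..ml} \<longrightarrow> al i = 0) \<and>
      (\<forall>j. j \<notin> {1..me} \<longrightarrow> b j = 0 \<and> be j = 0)}"

definition I0 :: "nat \<Rightarrow> ('n::finite) jet \<Rightarrow> nat set" where
  "I0 ml \<sigma> = {i \<in> {1..ml}. fst (snd \<sigma>) i = 0}"

definition I0star :: "nat \<Rightarrow> ('n::finite) jet \<Rightarrow> nat set" where
  "I0star ml \<sigma> = I0 ml \<sigma> \<union> {ml + 1}"

definition Ccone :: "nat \<Rightarrow> nat \<Rightarrow> ('n::finite) jet \<Rightarrow> ((nat \<Rightarrow> real) \<times> (nat \<Rightarrow> real)) set" where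
  "Ccone ml me \<sigma> = (case \<sigma> of (a, al, b, be) \<Rightarrow>
     {(mu, la). (\<forall>i\<in>{1..ml}. al i \<le> 0) \<and> (\<forall>i. 0 \<le> mu i) \<and>
        (\<forall>i. i \<notin> I0star ml \<sigma> \<longrightarrow> mu i = 0) \<and> (\<forall>j. j \<notin> {1..me} \<longrightarrow> la j = 0) \<and>
        (\<Sum>i=1..ml+1. mu i *\<^sub>R a i) + (\<Sum>j=1..me. la j *\<^sub>R b j) = 0})"

definition admits :: "nat \<Rightarrow> nat \<Rightarrow> ('n::finite) jet \<Rightarrow> nat set \<Rightarrow> nat set \<Rightarrow> bool" where
  "admits ml me \<sigma> I J \<longleftrightarrow> I \<subseteq> I0star ml \<sigma> \<and> J \<subseteq> {1..me} \<and> (I \<noteq> {} \<or> J \<noteq> {}) \<and>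
     (\<exists>(mu, la) \<in> Ccone ml me \<sigma>. (\<forall>i \<in> I0star ml \<sigma>. 0 < mu i \<longleftrightarrow> i \<in> I) \<and>
                                 (\<forall>j \<in> {1..me}. la j \<noteq> 0 \<longleftrightarrow> j \<in> J))"

definition Iset :: "nat \<Rightarrow> nat \<Rightarrow> ('n::finite) jet \<Rightarrow> (nat set \<times> nat set) set" where
  "Iset ml me \<sigma> = {(I, J). admits ml me \<sigma> I J \<and>
      (\<forall>I' J'. admits ml me \<sigma> I' J' \<and> I' \<subseteq> I \<and> J' \<subseteq> J \<longrightarrow> I' = I \<and> J' = J)}"

definition ISP :: "nat \<Rightarrow> nat \<Rightarrow> ('n::finite) jet \<Rightarrow> (nat set \<times> nat set) set" where
  "ISP ml me \<sigma> = {(I, J) \<in> Iset ml me \<sigma>. ml + 1 \<in> I}"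

definition IMF :: "nat \<Rightarrow> nat \<Rightarrow> ('n::finite) jet \<Rightarrow> (nat set \<times> nat set) set" where
  "IMF ml me \<sigma> = Iset ml me \<sigma> - ISP ml me \<sigma>"

definition chiSP :: "nat \<Rightarrow> nat \<Rightarrow> ('n::finite) jet set" where
  "chiSP ml me = {\<sigma> \<in> JSP ml me. ISP ml me \<sigma> \<noteq> {}}"

definition chiMF :: "nat \<Rightarrow> nat \<Rightarrow> ('n::finite) jet set" where
  "chiMF ml me = {\<sigma> \<in> JSP ml me. IMF ml me \<sigma> \<noteq> {}}"

end

theory Submission
  imports Defs
begin


lemma I0star_sub: "I0star ml \<sigma> \<subseteq> {1..ml+1}"
  by (auto simp: I0star_def I0_def)

lemma Cc_unfold:
  "(mu, la) \<in> Ccone ml me (a, al, b, be) \<longleftrightarrow>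
     (\<forall>i\<in>{1..ml}. al i \<le> 0) \<and> (\<forall>i. 0 \<le> mu i) \<and>
        (\<forall>i. i \<notin> I0star ml (a, al, b, be) \<longrightarrow> mu i = 0) \<and> (\<forall>j. j \<notin> {1..me} \<longrightarrow> la j = 0) \<and>
        (\<Sum>i=1..ml+1. mu i *\<^sub>R a i) + (\<Sum>j=1..me. la j *\<^sub>R b j) = 0"
  by (simp add: Ccone_def)

lemma Cc_props:
  assumes "(mu, la) \<in> Ccone ml me \<sigma>"
  shows "\<And>i. mu i \<noteq> 0 \<Longrightarrow> i \<in> I0star ml \<sigma>" "\<And>i. 0 \<le> mu i"
        "\<And>j. la j \<noteq> 0 \<Longrightarrow> j \<in> {1..me}"
        "finite {i. mu i \<noteq> 0}" "finite {j. la j \<noteq> 0}"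
proof -
  obtain a al b be where s: "\<sigma> = (a,al,b,be)" by (cases \<sigma>) auto
  show 1: "\<And>i. mu i \<noteq> 0 \<Longrightarrow> i \<in> I0star ml \<sigma>" "\<And>i. 0 \<le> mu i"
        "\<And>j. la j \<noteq> 0 \<Longrightarrow> j \<in> {1..me}"
    using assms unfolding s Cc_unfold by blast+
  show "finite {i. mu i \<noteq> 0}"
    by (rule finite_subset[of _ "{1..ml+1}"]) (use 1(1) I0star_sub in blast, simp)
  show "finite {j. la j \<noteq> 0}"
    by (rule finite_subset[of _ "{1..me}"]) (use 1(3) in blast, simp)
qed

lemma admits_iff:
  "admits ml me \<sigma> I J \<longleftrightarrow> (I \<noteq> {} \<or> J \<noteq> {}) \<and>
     (\<exists>mu la. (mu, la) \<in> Ccone ml me \<sigma> \<and> I = {i. mu i \<noteq> 0} \<and> J = {j. la j \<noteq> 0})"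
proof
  assume "admits ml me \<sigma> I J"
  then obtain mu la where A: "I \<subseteq> I0star ml \<sigma>" "J \<subseteq> {1..me}" "I \<noteq> {} \<or> J \<noteq> {}"
     "(mu, la) \<in> Ccone ml me \<sigma>" "\<forall>i \<in> I0star ml \<sigma>. 0 < mu i \<longleftrightarrow> i \<in> I"
     "\<forall>j \<in> {1..me}. la j \<noteq> 0 \<longleftrightarrow> j \<in> J"
    unfolding admits_def by auto
  note P = Cc_props[OF A(4)]
  have "I = {i. mu i \<noteq> 0}"
  proof (intro set_eqI iffI)
    fix i assume "i \<in> I" then have "i \<in> I0star ml \<sigma>" using A(1) by blast
    with A(5) \<open>i \<in> I\<close> have "0 < mu i" by blast
    then show "i \<in> {i. mu i \<noteq> 0}" by simp
  next
    fix i assume "i \<in> {i. mu i \<noteq> 0}"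
    then have "mu i \<noteq> 0" by simp
    have i0: "i \<in> I0star ml \<sigma>" using P(1) \<open>mu i \<noteq> 0\<close> by blast
    have "0 < mu i" using P(2)[of i] \<open>mu i \<noteq> 0\<close> by (simp add: less_le)
    then show "i \<in> I" using A(5) i0 by blast
  qed
  moreover have "J = {j. la j \<noteq> 0}"
    using A(2,6) P(3) by blast
  ultimately show "(I \<noteq> {} \<or> J \<noteq> {}) \<and>
     (\<exists>mu la. (mu, la) \<in> Ccone ml me \<sigma> \<and> I = {i. mu i \<noteq> 0} \<and> J = {j. la j \<noteq> 0})"
    using A(3,4) by blast
next
  assume "(I \<noteq> {} \<or> J \<noteq> {}) \<and>
     (\<exists>mu la. (mu, la) \<in> Ccone ml me \<sigma> \<and> I = {i. mu i \<noteq> 0} \<and> J = {j. la j \<noteq> 0})"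
  then obtain mu la where A: "I \<noteq> {} \<or> J \<noteq> {}" "(mu, la) \<in> Ccone ml me \<sigma>"
     "I = {i. mu i \<noteq> 0}" "J = {j. la j \<noteq> 0}" by blast
  note P = Cc_props[OF A(2)]
  show "admits ml me \<sigma> I J"
    unfolding admits_def
  proof (intro conjI)
    show "I \<subseteq> I0star ml \<sigma>" using A(3) P(1) by blast
    show "J \<subseteq> {1..me}" using A(4) P(3) by blast
    show "I \<noteq> {} \<or> J \<noteq> {}" by (rule A(1))
    have "(\<forall>i \<in> I0star ml \<sigma>. 0 < mu i \<longleftrightarrow> i \<in> I)"
      using A(3) P(2) by (auto simp: less_le)
    moreover have "(\<forall>j \<in> {1..me}. la j \<noteq> 0 \<longleftrightarrow> j \<in> J)" using A(4) by auto
    ultimately show "\<exists>(mu, la) \<in> Ccone ml me \<sigma>. (\<forall>i \<in> I0star ml \<sigma>. 0 < mu i \<longleftrightarrow> i \<in> I) \<and>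
                                 (\<forall>j \<in> {1..me}. la j \<noteq> 0 \<longleftrightarrow> j \<in> J)"
      using A(2) by blast
  qed
qed

lemma Cc_lin:
  assumes "(mu, la) \<in> Ccone ml me \<sigma>" "(nu, ka) \<in> Ccone ml me \<sigma>"
    and "\<forall>i. 0 \<le> mu i - t * nu i"
  shows "(\<lambda>i. mu i - t * nu i, \<lambda>j. la j - t * ka j) \<in> Ccone ml me \<sigma>"
proof -
  obtain a al b be where s: "\<sigma> = (a,al,b,be)" by (cases \<sigma>) auto
  have X: "(\<forall>i\<in>{1..ml}. al i \<le> 0)" "(\<forall>i. i \<notin> I0star ml \<sigma> \<longrightarrow> mu i = 0)"
      "(\<forall>j. j \<notin> {1..me} \<longrightarrow> la j = 0)"
      "(\<Sum>i=1..ml+1. mu i *\<^sub>R a i) + (\<Sum>j=1..me. la j *\<^sub>R b j) = 0"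
    using assms(1) unfolding s Cc_unfold by blast+
  have Y: "(\<forall>i. i \<notin> I0star ml \<sigma> \<longrightarrow> nu i = 0)"
      "(\<forall>j. j \<notin> {1..me} \<longrightarrow> ka j = 0)"
      "(\<Sum>i=1..ml+1. nu i *\<^sub>R a i) + (\<Sum>j=1..me. ka j *\<^sub>R b j) = 0"
    using assms(2) unfolding s Cc_unfold by blast+
  have "(\<Sum>i=1..ml+1. (mu i - t * nu i) *\<^sub>R a i) + (\<Sum>j=1..me. (la j - t * ka j) *\<^sub>R b j)
     = ((\<Sum>i=1..ml+1. mu i *\<^sub>R a i) + (\<Sum>j=1..me. la j *\<^sub>R b j))
       - t *\<^sub>R ((\<Sum>i=1..ml+1. nu i *\<^sub>R a i) + (\<Sum>j=1..me. ka j *\<^sub>R b j))"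
    by (simp add: scaleR_left_diff_distrib sum_subtractf scaleR_right.sum scaleR_right_distrib algebra_simps)
  also have "\<dots> = 0" using X(4) Y(3) by simp
  finally have E: "(\<Sum>i=1..ml+1. (mu i - t * nu i) *\<^sub>R a i) + (\<Sum>j=1..me. (la j - t * ka j) *\<^sub>R b j) = 0" .
  show ?thesis unfolding s Cc_unfold
  proof (intro conjI allI impI)
    show "\<forall>i\<in>{1..ml}. al i \<le> 0" by (rule X(1))
    show "\<And>i. 0 \<le> mu i - t * nu i" using assms(3) by blast
    show "\<And>i. i \<notin> I0star ml (a, al, b, be) \<Longrightarrow> mu i - t * nu i = 0"
      using X(2) Y(1) unfolding s by simp
    show "\<And>j. j \<notin> {1..me} \<Longrightarrow> la j - t * ka j = 0"
      using X(3) Y(2) by simp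
  qed (rule E)
qed

lemma Cc_neg:
  assumes "(nu, ka) \<in> Ccone ml me \<sigma>" "\<forall>i. nu i = 0"
  shows "(nu, \<lambda>j. - ka j) \<in> Ccone ml me \<sigma>"
proof -
  have "(\<lambda>i. nu i - 2 * nu i, \<lambda>j. ka j - 2 * ka j) \<in> Ccone ml me \<sigma>"
    by (rule Cc_lin[OF assms(1) assms(1)]) (simp add: assms(2))
  moreover have "(\<lambda>i. nu i - 2 * nu i) = nu" using assms(2) by auto
  moreover have "(\<lambda>j. ka j - 2 * ka j) = (\<lambda>j. - ka j)" by auto
  ultimately show ?thesis by simp
qed

lemma reduce:
  assumes x: "(mu, la) \<in> Ccone ml me \<sigma>" and y: "(nu, ka) \<in> Ccone ml me \<sigma>"
    and sub: "\<forall>i. nu i \<noteq> 0 \<longrightarrow> mu i \<noteq> 0" "\<forall>j. ka j \<noteq> 0 \<longrightarrow> la j \<noteq> 0"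
    and pos: "(\<exists>i. nu i \<noteq> 0) \<or> (\<exists>j. ka j \<noteq> 0 \<and> la j / ka j > 0)"
  shows "\<exists>t>0. (\<lambda>i. mu i - t * nu i, \<lambda>j. la j - t * ka j) \<in> Ccone ml me \<sigma> \<and>
     ((\<exists>i. nu i \<noteq> 0 \<and> mu i - t * nu i = 0) \<or> (\<exists>j. ka j \<noteq> 0 \<and> la j - t * ka j = 0))"
proof -
  note PX = Cc_props[OF x] and PY = Cc_props[OF y]
  define R where "R = (\<lambda>i. mu i / nu i) ` {i. nu i \<noteq> 0} \<union>
      (\<lambda>j. la j / ka j) ` {j. ka j \<noteq> 0 \<and> la j / ka j > 0}"
  have finR: "finite R" unfolding R_def using PY(4,5) by auto
  have neR: "R \<noteq> {}" unfolding R_def using pos by auto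
  have posR: "\<forall>r\<in>R. r > 0"
  proof
    fix r assume "r \<in> R"
    then consider i where "nu i \<noteq> 0" "r = mu i / nu i" | j where "ka j \<noteq> 0" "la j / ka j > 0" "r = la j / ka j"
      unfolding R_def by blast
    then show "r > 0"
    proof cases
      case 1
      then have "nu i > 0" using PY(2)[of i] by (simp add: less_le)
      moreover have "mu i > 0" using 1 sub(1) PX(2)[of i] by (simp add: less_le)
      ultimately show ?thesis using 1 by simp
    qed simp
  qed
  define t where "t = Min R"
  have tR: "t \<in> R" unfolding t_def using finR neR by simp
  have tpos: "t > 0" using tR posR by blast
  have tle: "t \<le> r" if "r \<in> R" for r unfolding t_def using finR that by simp
  have nonneg: "\<forall>i. 0 \<le> mu i - t * nu i"
  proof
    fix i show "0 \<le> mu i - t * nu i"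
    proof (cases "nu i = 0")
      case True then show ?thesis using PX(2)[of i] by simp
    next
      case False
      then have "nu i > 0" using PY(2)[of i] by (simp add: less_le)
      moreover have "t \<le> mu i / nu i" using tle False unfolding R_def by blast
      ultimately show ?thesis by (simp add: field_simps)
    qed
  qed
  have "(\<exists>i. nu i \<noteq> 0 \<and> mu i - t * nu i = 0) \<or> (\<exists>j. ka j \<noteq> 0 \<and> la j - t * ka j = 0)"
    using tR unfolding R_def by (auto simp: field_simps)
  then show ?thesis using tpos Cc_lin[OF x y nonneg] by blast
qed

lemma card_sum_less:
  assumes "finite I" "finite J" "I' \<subseteq> I" "J' \<subseteq> J" "\<not> (I' = I \<and> J' = J)"
  shows "card I' + card J' < card I + card J"
proof -
  have a: "card I' \<le> card I" by (rule card_mono[OF assms(1,3)])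
  have b: "card J' \<le> card J" by (rule card_mono[OF assms(2,4)])
  show ?thesis
  proof (cases "I' = I")
    case True
    then have "J' \<subset> J" using assms(4,5) by blast
    then have "card J' < card J" by (rule psubset_card_mono[OF assms(2)])
    then show ?thesis using a by linarith
  next
    case False
    then have "I' \<subset> I" using assms(3) by blast
    then have "card I' < card I" by (rule psubset_card_mono[OF assms(1)])
    then show ?thesis using b by linarith
  qed
qed

lemma exists_min:
  assumes x: "(mu, la) \<in> Ccone ml me \<sigma>" and nz: "{i. mu i \<noteq> 0} \<noteq> {} \<or> {j. la j \<noteq> 0} \<noteq> {}"
  shows "\<exists>I J. (I, J) \<in> Iset ml me \<sigma> \<and> I \<subseteq> {i. mu i \<noteq> 0} \<and> J \<subseteq> {j. la j \<noteq> 0}"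
proof -
  note PX = Cc_props[OF x]
  define P where "P = (\<lambda>p. admits ml me \<sigma> (fst p) (snd p) \<and> fst p \<subseteq> {i. mu i \<noteq> 0} \<and> snd p \<subseteq> {j. la j \<noteq> 0})"
  have "P ({i. mu i \<noteq> 0}, {j. la j \<noteq> 0})" unfolding P_def admits_iff using x nz by auto
  from ex_has_least_nat[of P, OF this, of "\<lambda>p. card (fst p) + card (snd p)"]
  obtain p where p: "P p" "\<forall>q. P q \<longrightarrow> card (fst p) + card (snd p) \<le> card (fst q) + card (snd q)"
    by blast
  obtain I J where pIJ: "p = (I, J)" by (cases p) auto
  have sI: "I \<subseteq> {i. mu i \<noteq> 0}" and sJ: "J \<subseteq> {j. la j \<noteq> 0}" using p(1) unfolding pIJ P_def by auto
  have fin: "finite I" "finite J" using finite_subset[OF sI PX(4)] finite_subset[OF sJ PX(5)] by auto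
  have adm: "admits ml me \<sigma> I J" using p(1) unfolding pIJ P_def by simp
  have mini: "I' = I \<and> J' = J" if a: "admits ml me \<sigma> I' J'" "I' \<subseteq> I" "J' \<subseteq> J" for I' J'
  proof (rule ccontr)
    assume ne: "\<not> (I' = I \<and> J' = J)"
    have "I' \<subseteq> {i. mu i \<noteq> 0}" "J' \<subseteq> {j. la j \<noteq> 0}" using a(2,3) sI sJ by auto
    then have "P (I', J')" using a(1) unfolding P_def by simp
    then have le: "card I + card J \<le> card I' + card J'" using p(2) unfolding pIJ by (metis fst_conv snd_conv)
    have "card I' + card J' < card I + card J" by (rule card_sum_less[OF fin a(2,3) ne])
    with le show False by simp
  qed
  have "(I, J) \<in> Iset ml me \<sigma>"
    unfolding Iset_def using adm mini by blast
  then show ?thesis using sI sJ by blast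
qed

lemma sp_char:
  "ISP ml me \<sigma> \<noteq> {} \<longleftrightarrow> (\<exists>mu la. (mu, la) \<in> Ccone ml me \<sigma> \<and> mu (ml+1) > 0)"
proof
  assume "ISP ml me \<sigma> \<noteq> {}"
  then obtain I J where "(I, J) \<in> Iset ml me \<sigma>" "ml + 1 \<in> I" unfolding ISP_def by auto
  then have "admits ml me \<sigma> I J" unfolding Iset_def by simp
  then obtain mu la where m: "(mu, la) \<in> Ccone ml me \<sigma>" "I = {i. mu i \<noteq> 0}"
    unfolding admits_iff by blast
  have "mu (ml+1) \<noteq> 0" using m(2) \<open>ml + 1 \<in> I\<close> by blast
  moreover have "mu (ml+1) \<ge> 0" using Cc_props(2)[OF m(1)] .
  ultimately show "\<exists>mu la. (mu, la) \<in> Ccone ml me \<sigma> \<and> mu (ml+1) > 0" using m(1) by force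
next
  assume "\<exists>mu la. (mu, la) \<in> Ccone ml me \<sigma> \<and> mu (ml+1) > 0"
  then obtain mu0 la0 where x0: "(mu0, la0) \<in> Ccone ml me \<sigma> \<and> mu0 (ml+1) > 0" by blast
  define Q where "Q = (\<lambda>x::(nat \<Rightarrow> real) \<times> (nat \<Rightarrow> real). x \<in> Ccone ml me \<sigma> \<and> fst x (ml+1) > 0)"
  define m where "m = (\<lambda>x::(nat \<Rightarrow> real) \<times> (nat \<Rightarrow> real). card {i. fst x i \<noteq> 0} + card {j. snd x j \<noteq> 0})"
  have "Q (mu0, la0)" unfolding Q_def using x0 by simp
  from ex_has_least_nat[of Q, OF this, of m]
  obtain x where x: "Q x" "\<forall>y. Q y \<longrightarrow> m x \<le> m y" by blast
  obtain mu la where xe: "x = (mu, la)" by (cases x) auto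
  have xC: "(mu, la) \<in> Ccone ml me \<sigma>" and xp: "mu (ml+1) > 0" using x(1) unfolding Q_def xe by auto
  note PX = Cc_props[OF xC]
  define I where "I = {i. mu i \<noteq> 0}"
  define J where "J = {j. la j \<noteq> 0}"
  have finIJ: "finite I" "finite J" unfolding I_def J_def using PX(4,5) .
  have mIJ: "m x = card I + card J" unfolding m_def xe I_def J_def by simp
  have ml1: "ml + 1 \<in> I" unfolding I_def using xp by simp
  have adm: "admits ml me \<sigma> I J" unfolding admits_iff I_def J_def using xC xp by force
  have mini: "I' = I \<and> J' = J" if a: "admits ml me \<sigma> I' J'" "I' \<subseteq> I" "J' \<subseteq> J" for I' J'
  proof (rule ccontr)
    assume ne: "\<not> (I' = I \<and> J' = J)"
    have lt: "card I' + card J' < card I + card J" by (rule card_sum_less[OF finIJ a(2,3) ne])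
    obtain nu ka where y: "(nu, ka) \<in> Ccone ml me \<sigma>" "I' = {i. nu i \<noteq> 0}" "J' = {j. ka j \<noteq> 0}"
      "I' \<noteq> {} \<or> J' \<noteq> {}"
      using a(1) unfolding admits_iff by blast
    note PY = Cc_props[OF y(1)]
    show False
    proof (cases "nu (ml+1) = 0")
      case False
      then have "nu (ml+1) > 0" using PY(2)[of "ml+1"] by (simp add: less_le)
      then have "Q (nu, ka)" unfolding Q_def using y(1) by simp
      then have "m x \<le> m (nu, ka)" using x(2) by blast
      moreover have "m (nu, ka) = card I' + card J'" unfolding m_def y(2,3) by simp
      ultimately show False using lt mIJ by simp
    next
      case True
      have subs: "\<forall>i. nu i \<noteq> 0 \<longrightarrow> mu i \<noteq> 0" using a(2) y(2) unfolding I_def by blast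
      have subl: "\<forall>j. ka j \<noteq> 0 \<longrightarrow> la j \<noteq> 0" using a(3) y(3) unfolding J_def by blast
      obtain ka' where k': "(nu, ka') \<in> Ccone ml me \<sigma>" "{j. ka' j \<noteq> 0} = {j. ka j \<noteq> 0}"
          "(\<exists>i. nu i \<noteq> 0) \<or> (\<exists>j. ka' j \<noteq> 0 \<and> la j / ka' j > 0)"
      proof (cases "\<exists>i. nu i \<noteq> 0")
        case True
        then show ?thesis using that[of ka] y(1) by blast
      next
        case False
        then have nu0: "\<forall>i. nu i = 0" by blast
        then have "I' = {}" using y(2) by simp
        then obtain j0 where j0: "ka j0 \<noteq> 0" using y(3,4) by blast
        then have la0: "la j0 \<noteq> 0" using subl by blast
        show ?thesis
        proof (cases "la j0 / ka j0 > 0")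
          case True
          then show ?thesis using that[of ka] y(1) j0 by blast
        next
          case False
          then have "la j0 / ka j0 < 0" using j0 la0 by (simp add: not_less le_less)
          then have "la j0 / (- ka j0) > 0" by simp
          moreover have "(nu, \<lambda>j. - ka j) \<in> Ccone ml me \<sigma>" using Cc_neg[OF y(1) nu0] .
          ultimately show ?thesis using that[of "\<lambda>j. - ka j"] j0 by auto
        qed
      qed
      have subl': "\<forall>j. ka' j \<noteq> 0 \<longrightarrow> la j \<noteq> 0" using subl k'(2) by blast
      obtain t where t: "t > 0" "(\<lambda>i. mu i - t * nu i, \<lambda>j. la j - t * ka' j) \<in> Ccone ml me \<sigma>"
        "(\<exists>i. nu i \<noteq> 0 \<and> mu i - t * nu i = 0) \<or> (\<exists>j. ka' j \<noteq> 0 \<and> la j - t * ka' j = 0)"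
        using reduce[OF xC k'(1) subs subl' k'(3)] by blast
      define z where "z = (\<lambda>i. mu i - t * nu i, \<lambda>j. la j - t * ka' j)"
      have "Q z" unfolding Q_def z_def using t(2) xp True by simp
      then have le: "m x \<le> m z" using x(2) by blast
      define I2 where "I2 = {i. mu i - t * nu i \<noteq> 0}"
      define J2 where "J2 = {j. la j - t * ka' j \<noteq> 0}"
      have mz: "m z = card I2 + card J2" unfolding m_def z_def I2_def J2_def by simp
      have s2: "I2 \<subseteq> I" unfolding I2_def I_def using subs by auto
      have s3: "J2 \<subseteq> J" unfolding J2_def J_def using subl' by auto
      have ne2: "\<not> (I2 = I \<and> J2 = J)"
        using t(3) subs subl' unfolding I2_def I_def J2_def J_def by blast
      have "card I2 + card J2 < card I + card J" by (rule card_sum_less[OF finIJ s2 s3 ne2])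
      then show False using le mz mIJ by simp
    qed
  qed
  have "(I, J) \<in> Iset ml me \<sigma>" unfolding Iset_def using adm mini by blast
  then show "ISP ml me \<sigma> \<noteq> {}" unfolding ISP_def using ml1 by blast
qed

lemma iset_char:
  "Iset ml me \<sigma> \<noteq> {} \<longleftrightarrow> (\<exists>mu la. (mu, la) \<in> Ccone ml me \<sigma> \<and> ((\<exists>i. mu i \<noteq> 0) \<or> (\<exists>j. la j \<noteq> 0)))"
proof
  assume "Iset ml me \<sigma> \<noteq> {}"
  then obtain I J where "(I, J) \<in> Iset ml me \<sigma>" by auto
  then have "admits ml me \<sigma> I J" unfolding Iset_def by simp
  then show "\<exists>mu la. (mu, la) \<in> Ccone ml me \<sigma> \<and> ((\<exists>i. mu i \<noteq> 0) \<or> (\<exists>j. la j \<noteq> 0))"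
    unfolding admits_iff by blast
next
  assume "\<exists>mu la. (mu, la) \<in> Ccone ml me \<sigma> \<and> ((\<exists>i. mu i \<noteq> 0) \<or> (\<exists>j. la j \<noteq> 0))"
  then obtain mu la where "(mu, la) \<in> Ccone ml me \<sigma>" "{i. mu i \<noteq> 0} \<noteq> {} \<or> {j. la j \<noteq> 0} \<noteq> {}" by auto
  from exists_min[OF this] show "Iset ml me \<sigma> \<noteq> {}" by blast
qed

lemma mf_char:
  "IMF ml me \<sigma> \<noteq> {} \<longleftrightarrow> (\<exists>mu la. (mu, la) \<in> Ccone ml me \<sigma> \<and> mu (ml+1) = 0 \<and> ((\<exists>i. mu i \<noteq> 0) \<or> (\<exists>j. la j \<noteq> 0)))"
proof
  assume "IMF ml me \<sigma> \<noteq> {}"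
  then obtain I J where "(I, J) \<in> Iset ml me \<sigma>" "ml + 1 \<notin> I" unfolding IMF_def ISP_def by auto
  then have "admits ml me \<sigma> I J" "ml + 1 \<notin> I" unfolding Iset_def by auto
  then show "\<exists>mu la. (mu, la) \<in> Ccone ml me \<sigma> \<and> mu (ml+1) = 0 \<and> ((\<exists>i. mu i \<noteq> 0) \<or> (\<exists>j. la j \<noteq> 0))"
    unfolding admits_iff by blast
next
  assume "\<exists>mu la. (mu, la) \<in> Ccone ml me \<sigma> \<and> mu (ml+1) = 0 \<and> ((\<exists>i. mu i \<noteq> 0) \<or> (\<exists>j. la j \<noteq> 0))"
  then obtain mu la where m: "(mu, la) \<in> Ccone ml me \<sigma>" "mu (ml+1) = 0"
     "{i. mu i \<noteq> 0} \<noteq> {} \<or> {j. la j \<noteq> 0} \<noteq> {}" by auto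
  from exists_min[OF m(1,3)] obtain I J where "(I, J) \<in> Iset ml me \<sigma>" "I \<subseteq> {i. mu i \<noteq> 0}" by blast
  moreover then have "ml + 1 \<notin> I" using m(2) by blast
  ultimately show "IMF ml me \<sigma> \<noteq> {}" unfolding IMF_def ISP_def by blast
qed



lemma cont_fst_app [continuous_intros]:
  "continuous_on S g \<Longrightarrow> continuous_on S (\<lambda>x. fst (g x) i)"
  by (rule continuous_on_product_then_coordinatewise) (intro continuous_intros)

lemma cont_snd_app [continuous_intros]:
  "continuous_on S g \<Longrightarrow> continuous_on S (\<lambda>x. snd (g x) i)"
  by (rule continuous_on_product_then_coordinatewise) (intro continuous_intros)

lemma compact_cube: "compact {f :: nat \<Rightarrow> real. \<forall>i. \<bar>f i\<bar> \<le> 1}"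
proof -
  have "compactin (product_topology (\<lambda>_. euclidean) UNIV) (Pi\<^sub>E UNIV (\<lambda>_::nat. {-1..1::real}))"
    by (subst compactin_PiE) simp
  then have "compact (Pi\<^sub>E UNIV (\<lambda>_::nat. {-1..1::real}))"
    by (simp add: euclidean_product_topology compactin_euclidean_iff)
  moreover have "Pi\<^sub>E UNIV (\<lambda>_::nat. {-1..1::real}) = {f :: nat \<Rightarrow> real. \<forall>i. \<bar>f i\<bar> \<le> 1}"
    by (auto simp: PiE_iff abs_le_iff)
  ultimately show ?thesis by simp
qed

definition Kset :: "nat \<Rightarrow> nat \<Rightarrow> ((nat \<Rightarrow> real) \<times> (nat \<Rightarrow> real)) set" where
  "Kset ml me = {x. (\<forall>i. \<bar>fst x i\<bar> \<le> 1) \<and> (\<forall>j. \<bar>snd x j\<bar> \<le> 1) \<and>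
      (\<Sum>i=1..ml+1. \<bar>fst x i\<bar>) + (\<Sum>j=1..me. \<bar>snd x j\<bar>) = 1}"

lemma compact_Kset: "compact (Kset ml me)"
proof -
  have "Kset ml me = ({f :: nat \<Rightarrow> real. \<forall>i. \<bar>f i\<bar> \<le> 1} \<times> {f :: nat \<Rightarrow> real. \<forall>i. \<bar>f i\<bar> \<le> 1})
      \<inter> {x. (\<Sum>i=1..ml+1. \<bar>fst x i\<bar>) + (\<Sum>j=1..me. \<bar>snd x j\<bar>) = 1}"
    unfolding Kset_def by auto
  moreover have "closed {x :: (nat \<Rightarrow> real) \<times> (nat \<Rightarrow> real). (\<Sum>i=1..ml+1. \<bar>fst x i\<bar>) + (\<Sum>j=1..me. \<bar>snd x j\<bar>) = 1}"
    by (intro closed_Collect_eq continuous_intros continuous_on_id)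
  ultimately show ?thesis
    using compact_Int_closed[OF compact_Times[OF compact_cube compact_cube]] by simp
qed

lemma closed_imp_const: "closed {x. P x} \<Longrightarrow> closed {x. c \<longrightarrow> P x}"
  by (cases c) auto

lemma JSP_iff: "\<sigma> \<in> JSP ml me \<longleftrightarrow> (\<forall>i. i \<notin> {1..ml+1} \<longrightarrow> fst \<sigma> i = 0) \<and>
   (\<forall>i. i \<notin> {1..ml} \<longrightarrow> fst (snd \<sigma>) i = 0) \<and>
   (\<forall>j. j \<notin> {1..me} \<longrightarrow> fst (snd (snd \<sigma>)) j = 0) \<and> (\<forall>j. j \<notin> {1..me} \<longrightarrow> snd (snd (snd \<sigma>)) j = 0)"
  by (cases \<sigma>) (auto simp: JSP_def)

lemma closed_JSP: "closed (JSP ml me :: ('n::finite) jet set)"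
proof -
  have "JSP ml me = {\<sigma> :: 'n jet. (\<forall>i. i \<notin> {1..ml+1} \<longrightarrow> fst \<sigma> i = 0) \<and>
   (\<forall>i. i \<notin> {1..ml} \<longrightarrow> fst (snd \<sigma>) i = 0) \<and>
   (\<forall>j. j \<notin> {1..me} \<longrightarrow> fst (snd (snd \<sigma>)) j = 0) \<and> (\<forall>j. j \<notin> {1..me} \<longrightarrow> snd (snd (snd \<sigma>)) j = 0)}"
    using JSP_iff by blast
  moreover have "closed \<dots>"
    by (intro closed_Collect_conj closed_Collect_all closed_imp_const closed_Collect_eq continuous_intros continuous_on_id)
  ultimately show ?thesis by simp
qed

lemma Cc_closed_form: "(mu, la) \<in> Ccone ml me \<sigma> \<longleftrightarrow>
   (\<forall>i. i \<in> {1..ml} \<longrightarrow> fst (snd \<sigma>) i \<le> 0) \<and> (\<forall>i. 0 \<le> mu i) \<and>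
   (\<forall>i. i \<notin> {1..ml+1} \<longrightarrow> mu i = 0) \<and> (\<forall>i. i \<in> {1..ml} \<longrightarrow> mu i * fst (snd \<sigma>) i = 0) \<and>
   (\<forall>j. j \<notin> {1..me} \<longrightarrow> la j = 0) \<and>
   (\<Sum>i=1..ml+1. mu i *\<^sub>R fst \<sigma> i) + (\<Sum>j=1..me. la j *\<^sub>R fst (snd (snd \<sigma>)) j) = 0"
proof -
  obtain a al b be where s: "\<sigma> = (a,al,b,be)" by (cases \<sigma>) auto
  have e: "(\<forall>i. i \<notin> I0star ml (a, al, b, be) \<longrightarrow> mu i = 0) \<longleftrightarrow>
     (\<forall>i. i \<notin> {1..ml+1} \<longrightarrow> mu i = 0) \<and> (\<forall>i. i \<in> {1..ml} \<longrightarrow> mu i * al i = 0)"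
  proof
    assume h: "\<forall>i. i \<notin> I0star ml (a, al, b, be) \<longrightarrow> mu i = 0"
    show "(\<forall>i. i \<notin> {1..ml+1} \<longrightarrow> mu i = 0) \<and> (\<forall>i. i \<in> {1..ml} \<longrightarrow> mu i * al i = 0)"
    proof (intro conjI allI impI)
      fix i assume "i \<notin> {1..ml+1}" then show "mu i = 0" using h I0star_sub by blast
    next
      fix i assume i: "i \<in> {1..ml}"
      show "mu i * al i = 0"
      proof (cases "al i = 0")
        case False
        then have "i \<notin> I0star ml (a, al, b, be)" using i by (auto simp: I0star_def I0_def)
        then show ?thesis using h by simp
      qed simp
    qed
  next
    assume h: "(\<forall>i. i \<notin> {1..ml+1} \<longrightarrow> mu i = 0) \<and> (\<forall>i. i \<in> {1..ml} \<longrightarrow> mu i * al i = 0)"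
    show "\<forall>i. i \<notin> I0star ml (a, al, b, be) \<longrightarrow> mu i = 0"
    proof (intro allI impI)
      fix i assume i: "i \<notin> I0star ml (a, al, b, be)"
      show "mu i = 0"
      proof (cases "i \<in> {1..ml}")
        case True
        then have "al i \<noteq> 0" using i by (auto simp: I0star_def I0_def)
        moreover have "mu i * al i = 0" using h True by blast
        ultimately show ?thesis by simp
      next
        case False
        then have "i \<notin> {1..ml+1}" using i by (auto simp: I0star_def I0_def)
        then show ?thesis using h by simp
      qed
    qed
  qed
  show ?thesis unfolding s Cc_unfold e Ball_def by simp
qed

definition Tset :: "nat \<Rightarrow> nat \<Rightarrow> bool \<Rightarrow> (('n::finite) jet \<times> ((nat \<Rightarrow> real) \<times> (nat \<Rightarrow> real))) set" where
  "Tset ml me mf = {p. fst p \<in> JSP ml me \<and>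
   (\<forall>i. i \<in> {1..ml} \<longrightarrow> fst (snd (fst p)) i \<le> 0) \<and> (\<forall>i. 0 \<le> fst (snd p) i) \<and>
   (\<forall>i. i \<notin> {1..ml+1} \<longrightarrow> fst (snd p) i = 0) \<and> (\<forall>i. i \<in> {1..ml} \<longrightarrow> fst (snd p) i * fst (snd (fst p)) i = 0) \<and>
   (\<forall>j. j \<notin> {1..me} \<longrightarrow> snd (snd p) j = 0) \<and>
   (\<Sum>i=1..ml+1. fst (snd p) i *\<^sub>R fst (fst p) i) + (\<Sum>j=1..me. snd (snd p) j *\<^sub>R fst (snd (snd (fst p))) j) = 0 \<and>
   (mf \<longrightarrow> fst (snd p) (ml+1) = 0)}"

lemma Tset_iff: "(\<sigma>, (mu, la)) \<in> Tset ml me mf \<longleftrightarrow> \<sigma> \<in> JSP ml me \<and> (mu, la) \<in> Ccone ml me \<sigma> \<and> (mf \<longrightarrow> mu (ml+1) = 0)"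
  unfolding Tset_def Cc_closed_form by simp

lemma closed_Tset: "closed (Tset ml me mf)"
proof -
  have c: "closed {p :: ('n::finite) jet \<times> ((nat \<Rightarrow> real) \<times> (nat \<Rightarrow> real)). fst p \<in> JSP ml me}"
    using closed_vimage[OF closed_JSP continuous_on_fst[OF continuous_on_id]] by (simp add: vimage_def)
  show ?thesis unfolding Tset_def
    by (intro closed_Collect_conj c closed_Collect_all closed_imp_const closed_Collect_eq closed_Collect_le
        continuous_intros continuous_on_id)
qed

lemma normalize:
  assumes x: "(mu, la) \<in> Ccone ml me \<sigma>" and nz: "(\<exists>i. mu i \<noteq> 0) \<or> (\<exists>j. la j \<noteq> 0)"
  shows "\<exists>mu' la'. (mu', la') \<in> Ccone ml me \<sigma> \<and> (mu', la') \<in> Kset ml me \<and> (mu (ml+1) = 0 \<longrightarrow> mu' (ml+1) = 0)"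
proof -
  note PX = Cc_props[OF x]
  define s where "s = (\<Sum>i=1..ml+1. \<bar>mu i\<bar>) + (\<Sum>j=1..me. \<bar>la j\<bar>)"
  have s1: "0 \<le> (\<Sum>i=1..ml+1. \<bar>mu i\<bar>)" "0 \<le> (\<Sum>j=1..me. \<bar>la j\<bar>)" by (auto intro: sum_nonneg)
  have bmu: "\<bar>mu i\<bar> \<le> s" for i
  proof (cases "mu i = 0")
    case False
    then have "i \<in> {1..ml+1}" using PX(1) I0star_sub by blast
    then have "\<bar>mu i\<bar> \<le> (\<Sum>i=1..ml+1. \<bar>mu i\<bar>)" by (intro member_le_sum) auto
    then show ?thesis unfolding s_def using s1 by linarith
  qed (use s1 s_def in auto)
  have bla: "\<bar>la j\<bar> \<le> s" for j
  proof (cases "la j = 0")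
    case False
    then have "j \<in> {1..me}" using PX(3) by blast
    then have "\<bar>la j\<bar> \<le> (\<Sum>j=1..me. \<bar>la j\<bar>)" by (intro member_le_sum) auto
    then show ?thesis unfolding s_def using s1 by linarith
  qed (use s1 s_def in auto)
  have spos: "s > 0"
  proof -
    from nz consider i where "mu i \<noteq> 0" | j where "la j \<noteq> 0" by blast
    then show ?thesis
    proof cases
      case 1 then show ?thesis using bmu[of i] by simp
    next
      case 2 then show ?thesis using bla[of j] by simp
    qed
  qed
  define t where "t = 1 - 1 / s"
  have mut: "mu i - t * mu i = mu i / s" for i unfolding t_def using spos by (simp add: field_simps)
  have lat: "la j - t * la j = la j / s" for j unfolding t_def using spos by (simp add: field_simps)
  have "\<forall>i. 0 \<le> mu i - t * mu i" unfolding mut using PX(2) spos by simp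
  from Cc_lin[OF x x this] have C: "(\<lambda>i. mu i / s, \<lambda>j. la j / s) \<in> Ccone ml me \<sigma>"
    unfolding mut lat .
  have ab: "\<bar>y / s\<bar> = \<bar>y\<bar> / s" for y using spos by (simp add: abs_divide)
  have K: "(\<lambda>i. mu i / s, \<lambda>j. la j / s) \<in> Kset ml me"
    unfolding Kset_def mem_Collect_eq fst_conv snd_conv
  proof (intro conjI allI)
    fix i show "\<bar>mu i / s\<bar> \<le> 1" unfolding ab using bmu[of i] spos by (simp add: pos_divide_le_eq)
  next
    fix j show "\<bar>la j / s\<bar> \<le> 1" unfolding ab using bla[of j] spos by (simp add: pos_divide_le_eq)
  next
    have "(\<Sum>i=1..ml+1. \<bar>mu i / s\<bar>) + (\<Sum>j=1..me. \<bar>la j / s\<bar>) =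
        ((\<Sum>i=1..ml+1. \<bar>mu i\<bar>) + (\<Sum>j=1..me. \<bar>la j\<bar>)) / s"
      unfolding ab by (simp add: sum_divide_distrib add_divide_distrib)
    also have "\<dots> = s / s" by (simp add: s_def)
    finally show "(\<Sum>i=1..ml+1. \<bar>mu i / s\<bar>) + (\<Sum>j=1..me. \<bar>la j / s\<bar>) = 1"
      using spos by simp
  qed
  show ?thesis by (rule exI[of _ "\<lambda>i. mu i / s"], rule exI[of _ "\<lambda>j. la j / s"]) (use C K in simp)
qed

lemma Kset_nz: "(mu, la) \<in> Kset ml me \<Longrightarrow> (\<exists>i. mu i \<noteq> 0) \<or> (\<exists>j. la j \<noteq> 0)"
proof (rule ccontr)
  assume "(mu, la) \<in> Kset ml me" "\<not> ((\<exists>i. mu i \<noteq> 0) \<or> (\<exists>j. la j \<noteq> 0))"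
  then have "(\<Sum>i=1..ml+1. \<bar>mu i\<bar>) + (\<Sum>j=1..me. \<bar>la j\<bar>) = 1" "\<forall>i. mu i = 0" "\<forall>j. la j = 0"
    unfolding Kset_def by auto
  then show False by simp
qed

lemma union_eq: "chiSP ml me \<union> chiMF ml me = fst ` (Tset ml me False \<inter> (UNIV \<times> Kset ml me))"
proof -
  have "chiSP ml me \<union> chiMF ml me = {\<sigma> \<in> JSP ml me. Iset ml me \<sigma> \<noteq> {}}"
    unfolding chiSP_def chiMF_def IMF_def ISP_def by auto
  also have "\<dots> = fst ` (Tset ml me False \<inter> (UNIV \<times> Kset ml me))"
  proof (intro set_eqI iffI)
    fix \<sigma> assume "\<sigma> \<in> {\<sigma> \<in> JSP ml me. Iset ml me \<sigma> \<noteq> {}}"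
    then have J: "\<sigma> \<in> JSP ml me" and "Iset ml me \<sigma> \<noteq> {}" by auto
    then obtain mu la where "(mu, la) \<in> Ccone ml me \<sigma>" "(\<exists>i. mu i \<noteq> 0) \<or> (\<exists>j. la j \<noteq> 0)"
      unfolding iset_char by blast
    from normalize[OF this] obtain mu' la' where "(mu', la') \<in> Ccone ml me \<sigma>" "(mu', la') \<in> Kset ml me"
      by blast
    then have "(\<sigma>, (mu', la')) \<in> Tset ml me False \<inter> (UNIV \<times> Kset ml me)" using J Tset_iff[of \<sigma> mu' la'] by simp
    then show "\<sigma> \<in> fst ` (Tset ml me False \<inter> (UNIV \<times> Kset ml me))" by force
  next
    fix \<sigma> assume "\<sigma> \<in> fst ` (Tset ml me False \<inter> (UNIV \<times> Kset ml me))"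
    then obtain mu la where "(\<sigma>, (mu, la)) \<in> Tset ml me False" "(mu, la) \<in> Kset ml me" by force
    then have "\<sigma> \<in> JSP ml me" "(mu, la) \<in> Ccone ml me \<sigma>" "(\<exists>i. mu i \<noteq> 0) \<or> (\<exists>j. la j \<noteq> 0)"
      using Tset_iff Kset_nz by blast+
    then show "\<sigma> \<in> {\<sigma> \<in> JSP ml me. Iset ml me \<sigma> \<noteq> {}}" unfolding iset_char by blast
  qed
  finally show ?thesis .
qed

lemma mf_eq: "chiMF ml me = fst ` (Tset ml me True \<inter> (UNIV \<times> Kset ml me))"
proof (intro set_eqI iffI)
  fix \<sigma> assume "\<sigma> \<in> chiMF ml me"
  then have J: "\<sigma> \<in> JSP ml me" and I: "IMF ml me \<sigma> \<noteq> {}" unfolding chiMF_def by auto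
  obtain mu la where m: "(mu, la) \<in> Ccone ml me \<sigma>" "(\<exists>i. mu i \<noteq> 0) \<or> (\<exists>j. la j \<noteq> 0)" "mu (ml+1) = 0"
    using I unfolding mf_char by blast
  obtain mu' la' where m': "(mu', la') \<in> Ccone ml me \<sigma>" "(mu', la') \<in> Kset ml me" "mu' (ml+1) = 0"
    using normalize[OF m(1,2)] m(3) by blast
  have "(\<sigma>, (mu', la')) \<in> Tset ml me True" using J m' Tset_iff[of \<sigma> mu' la'] by simp
  then have "(\<sigma>, (mu', la')) \<in> Tset ml me True \<inter> (UNIV \<times> Kset ml me)" using m'(2) by simp
  then show "\<sigma> \<in> fst ` (Tset ml me True \<inter> (UNIV \<times> Kset ml me))" by (rule rev_image_eqI) simp
next
  fix \<sigma> assume "\<sigma> \<in> fst ` (Tset ml me True \<inter> (UNIV \<times> Kset ml me))"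
  then obtain p where p: "p \<in> Tset ml me True" "snd p \<in> Kset ml me" "\<sigma> = fst p" by auto
  obtain mu la where pe: "p = (\<sigma>, (mu, la))" using p(3) by (cases p) auto
  have T: "\<sigma> \<in> JSP ml me" "(mu, la) \<in> Ccone ml me \<sigma>" "mu (ml+1) = 0"
    using p(1) unfolding pe Tset_iff by auto
  have "(\<exists>i. mu i \<noteq> 0) \<or> (\<exists>j. la j \<noteq> 0)" using Kset_nz p(2) unfolding pe by simp
  then have "IMF ml me \<sigma> \<noteq> {}" unfolding mf_char using T(2,3) by blast
  then show "\<sigma> \<in> chiMF ml me" unfolding chiMF_def using T(1) by simp
qed

lemma closed_proj:
  fixes T :: "('a::topological_space \<times> 'b::topological_space) set"
  assumes "closed T" "compact K"
  shows "closed (fst ` (T \<inter> (UNIV \<times> K)))"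
proof -
  have cs: "compact_space (subtopology euclidean K)"
    using assms(2) by (simp add: compact_space_subtopology compactin_euclidean_iff)
  have e: "prod_topology euclidean (subtopology euclidean K) = subtopology euclidean (UNIV \<times> K)"
    by (subst prod_topology_subtopology(2)) (simp only: prod_topology_euclidean topspace_euclidean)
  have "closedin (subtopology euclidean (UNIV \<times> K)) ((UNIV \<times> K) \<inter> T)"
    by (rule closedin_closed_Int[OF assms(1)])
  then have c: "closedin (prod_topology euclidean (subtopology euclidean K)) (T \<inter> (UNIV \<times> K))"
    unfolding e by (subst Int_commute)
  have cm: "closed_map (prod_topology euclidean (subtopology euclidean K)) euclidean fst"
    by (rule closed_map_fst[OF cs])
  have "closedin euclidean (fst ` (T \<inter> (UNIV \<times> K)))"
    using cm c unfolding closed_map_def by (elim allE impE)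
  then show ?thesis by (simp only: closed_closedin)
qed

lemma closed_union: "closed (chiSP ml me \<union> chiMF ml me :: ('n::finite) jet set)"
  unfolding union_eq by (rule closed_proj[OF closed_Tset compact_Kset])

lemma closed_mf: "closed (chiMF ml me :: ('n::finite) jet set)"
  unfolding mf_eq by (rule closed_proj[OF closed_Tset compact_Kset])



lemma closure_path:
  fixes f :: "real \<Rightarrow> 'a::topological_space"
  assumes "continuous_on UNIV f" "\<And>d. d > 0 \<Longrightarrow> f d \<in> S"
  shows "f 0 \<in> closure S"
proof (rule Lim_in_closed_set[of _ f "at_right 0"])
  show "closed (closure S)" by (rule closed_closure)
  show "\<forall>\<^sub>F x in at_right 0. f x \<in> closure S"
    unfolding eventually_at_right_field
  proof (intro exI[of _ "1::real"] conjI allI impI)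
    show "(0::real) < 1" by simp
    fix y :: real assume "0 < y" "y < 1"
    have "f y \<in> S" using assms(2)[OF \<open>0 < y\<close>] .
    then show "f y \<in> closure S" using closure_subset[of S] by (rule subsetD[rotated])
  qed
  show "at_right (0::real) \<noteq> bot" by (rule trivial_limit_at_right_real)
  have "(f \<longlongrightarrow> f 0) (at 0 within UNIV)" using assms(1) unfolding continuous_on_def by blast
  then show "(f \<longlongrightarrow> f 0) (at_right 0)" by (rule tendsto_within_subset) simp
qed

lemma I0star_cong: "I0star ml (a, al, b, be) = I0star ml (a', al, b', be)"
  by (simp add: I0star_def I0_def)

lemma mf_sub_closure: "chiMF ml me \<subseteq> closure (chiSP ml me :: ('n::finite) jet set)"
proof
  fix \<sigma> :: "'n jet" assume s: "\<sigma> \<in> chiMF ml me"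
  obtain a al b be where se: "\<sigma> = (a, al, b, be)" by (cases \<sigma>) auto
  have J: "(a, al, b, be) \<in> JSP ml me" and I: "IMF ml me \<sigma> \<noteq> {}" using s unfolding chiMF_def se by auto
  obtain mu la where m: "(mu, la) \<in> Ccone ml me \<sigma>" "(\<exists>i. mu i \<noteq> 0) \<or> (\<exists>j. la j \<noteq> 0)" "mu (ml+1) = 0"
    using I unfolding mf_char by blast
  have X: "(\<forall>i\<in>{1..ml}. al i \<le> 0)" "(\<forall>i. 0 \<le> mu i)" "(\<forall>i. i \<notin> I0star ml (a, al, b, be) \<longrightarrow> mu i = 0)"
      "(\<forall>j. j \<notin> {1..me} \<longrightarrow> la j = 0)"
      "(\<Sum>i=1..ml+1. mu i *\<^sub>R a i) + (\<Sum>j=1..me. la j *\<^sub>R b j) = 0"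
    using m(1) unfolding se Cc_unfold by blast+
  have Ja: "(\<forall>i. i \<notin> {1..ml+1} \<longrightarrow> a i = 0)" "(\<forall>i. i \<notin> {1..ml} \<longrightarrow> al i = 0)"
      "(\<forall>j. j \<notin> {1..me} \<longrightarrow> b j = 0 \<and> be j = 0)"
    using J unfolding JSP_def by auto
  define c where "c = a (ml+1)"
  define mu' where "mu' = (\<lambda>d::real. mu(ml+1 := d))"
  have C': "(mu' d, la) \<in> Ccone ml me (a', al, b', be)" if
      d: "d > 0" and sumeq: "(\<Sum>i=1..ml+1. mu' d i *\<^sub>R a' i) + (\<Sum>j=1..me. la j *\<^sub>R b' j) = 0" for d a' b'
    unfolding Cc_unfold
  proof (intro conjI)
    show "\<forall>i\<in>{1..ml}. al i \<le> 0" by (rule X(1))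
    show "\<forall>i. 0 \<le> mu' d i" using X(2) d unfolding mu'_def by simp
    show "\<forall>i. i \<notin> I0star ml (a', al, b', be) \<longrightarrow> mu' d i = 0"
      using X(3) unfolding mu'_def I0star_cong[of ml a al b be a' b'] by (simp add: I0star_def)
    show "\<forall>j. j \<notin> {1..me} \<longrightarrow> la j = 0" by (rule X(4))
  qed (rule sumeq)
  have sum_mu': "(\<Sum>i=1..ml+1. mu' d i *\<^sub>R g i) = (\<Sum>i=1..ml+1. mu i *\<^sub>R g i) + d *\<^sub>R g (ml+1)" for d and g :: "nat \<Rightarrow> real^'n"
  proof -
    have "(\<Sum>i=1..ml+1. mu' d i *\<^sub>R g i) = (\<Sum>i=1..ml+1. mu i *\<^sub>R g i + (if i = ml+1 then d *\<^sub>R g (ml+1) else 0))"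
      using m(3) by (intro sum.cong) (auto simp: mu'_def)
    also have "\<dots> = (\<Sum>i=1..ml+1. mu i *\<^sub>R g i) + d *\<^sub>R g (ml+1)"
      by (simp add: sum.distrib)
    finally show ?thesis .
  qed
  from m(2) show "\<sigma> \<in> closure (chiSP ml me)"
  proof (elim disjE exE)
    fix i0 assume i0: "mu i0 \<noteq> 0"
    have i0r: "i0 \<in> {1..ml}"
    proof -
      have "i0 \<in> I0star ml (a, al, b, be)" using X(3) i0 by blast
      moreover have "i0 \<noteq> ml + 1" using i0 m(3) by auto
      ultimately show ?thesis by (auto simp: I0star_def I0_def)
    qed
    define f where "f = (\<lambda>d::real. ((\<lambda>i. a i - (d * (if i = i0 then 1 / mu i0 else 0)) *\<^sub>R c), al, b, be))"
    have cont: "continuous_on UNIV f" unfolding f_def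
      by (intro continuous_intros continuous_on_coordinatewise_then_product)
    have f0: "f 0 = \<sigma>" unfolding f_def se by simp
    have inS: "f d \<in> chiSP ml me" if d: "d > 0" for d
    proof -
      define a' where "a' = (\<lambda>i. a i - (d * (if i = i0 then 1 / mu i0 else 0)) *\<^sub>R c)"
      have fd: "f d = (a', al, b, be)" unfolding f_def a'_def by simp
      have "(\<Sum>i=1..ml+1. mu i *\<^sub>R a' i) = (\<Sum>i=1..ml+1. mu i *\<^sub>R a i - (if i = i0 then d *\<^sub>R c else 0))"
        by (rule sum.cong) (auto simp: a'_def i0 algebra_simps)
      also have "\<dots> = (\<Sum>i=1..ml+1. mu i *\<^sub>R a i) - d *\<^sub>R c"
        using i0r by (simp add: sum_subtractf)
      finally have e1: "(\<Sum>i=1..ml+1. mu i *\<^sub>R a' i) = (\<Sum>i=1..ml+1. mu i *\<^sub>R a i) - d *\<^sub>R c" .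
      have "a' (ml+1) = c" unfolding a'_def c_def using i0r by auto
      then have "(\<Sum>i=1..ml+1. mu' d i *\<^sub>R a' i) + (\<Sum>j=1..me. la j *\<^sub>R b j) = 0"
        unfolding sum_mu' e1 using X(5) by simp
      from C'[OF d this] have "(mu' d, la) \<in> Ccone ml me (f d)" unfolding fd .
      moreover have "mu' d (ml+1) > 0" unfolding mu'_def using d by simp
      ultimately have "ISP ml me (f d) \<noteq> {}" unfolding sp_char by blast
      moreover have "f d \<in> JSP ml me" unfolding fd JSP_def a'_def using Ja i0r by auto
      ultimately show ?thesis unfolding chiSP_def by blast
    qed
    show ?thesis using closure_path[OF cont inS] f0 by simp
  next
    fix j0 assume j0: "la j0 \<noteq> 0"
    have j0r: "j0 \<in> {1..me}" using X(4) j0 by blast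
    define f where "f = (\<lambda>d::real. (a, al, (\<lambda>j. b j - (d * (if j = j0 then 1 / la j0 else 0)) *\<^sub>R c), be))"
    have cont: "continuous_on UNIV f" unfolding f_def
      by (intro continuous_intros continuous_on_coordinatewise_then_product)
    have f0: "f 0 = \<sigma>" unfolding f_def se by simp
    have inS: "f d \<in> chiSP ml me" if d: "d > 0" for d
    proof -
      define b' where "b' = (\<lambda>j. b j - (d * (if j = j0 then 1 / la j0 else 0)) *\<^sub>R c)"
      have fd: "f d = (a, al, b', be)" unfolding f_def b'_def by simp
      have "(\<Sum>j=1..me. la j *\<^sub>R b' j) = (\<Sum>j=1..me. la j *\<^sub>R b j - (if j = j0 then d *\<^sub>R c else 0))"
        by (rule sum.cong) (auto simp: b'_def j0 algebra_simps)
      also have "\<dots> = (\<Sum>j=1..me. la j *\<^sub>R b j) - d *\<^sub>R c"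
        using j0r by (simp add: sum_subtractf)
      finally have e1: "(\<Sum>j=1..me. la j *\<^sub>R b' j) = (\<Sum>j=1..me. la j *\<^sub>R b j) - d *\<^sub>R c" .
      have "(\<Sum>i=1..ml+1. mu' d i *\<^sub>R a i) + (\<Sum>j=1..me. la j *\<^sub>R b' j) = 0"
        unfolding sum_mu' e1 c_def using X(5) by (simp add: algebra_simps)
      from C'[OF d this] have "(mu' d, la) \<in> Ccone ml me (f d)" unfolding fd .
      moreover have "mu' d (ml+1) > 0" unfolding mu'_def using d by simp
      ultimately have "ISP ml me (f d) \<noteq> {}" unfolding sp_char by blast
      moreover have "f d \<in> JSP ml me" unfolding fd JSP_def b'_def using Ja j0r by auto
      ultimately show ?thesis unfolding chiSP_def by blast
    qed
    show ?thesis using closure_path[OF cont inS] f0 by simp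
  qed
qed

theorem mainTheorem7:
  fixes ml me :: nat
  shows "closed (chiMF ml me :: ('n::finite) jet set)
       \<and> closed (chiSP ml me \<union> chiMF ml me :: ('n::finite) jet set)
       \<and> (chiMF ml me :: ('n::finite) jet set) \<subseteq> closure (chiSP ml me)
       \<and> closure (chiSP ml me :: ('n::finite) jet set) = chiSP ml me \<union> chiMF ml me"
proof (intro conjI)
  show "closed (chiMF ml me :: ('n::finite) jet set)" by (rule closed_mf)
  show "closed (chiSP ml me \<union> chiMF ml me :: ('n::finite) jet set)" by (rule closed_union)
  show "(chiMF ml me :: ('n::finite) jet set) \<subseteq> closure (chiSP ml me)" by (rule mf_sub_closure)
  show "closure (chiSP ml me :: ('n::finite) jet set) = chiSP ml me \<union> chiMF ml me"
  proof
    show "closure (chiSP ml me :: ('n::finite) jet set) \<subseteq> chiSP ml me \<union> chiMF ml me"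
      by (rule closure_minimal[OF Un_upper1 closed_union])
    show "chiSP ml me \<union> chiMF ml me \<subseteq> closure (chiSP ml me :: ('n::finite) jet set)"
      using mf_sub_closure[of ml me] closure_subset[of "chiSP ml me :: ('n::finite) jet set"] by (rule Un_least[rotated])
  qed
qed

end
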